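(* Let $\mathbb{F}_q$ be a finite field with $\mathrm{char}(\mathbb{F}_q)\ne 3$ in which $-3$ is a square, and let $\mathcal{Q}=\mathbb{F}_q^3$ with the relation: $(x_1,y_1,z_1)$ and $(x_2,y_2,z_2)$ commute iff $x_1y_2-y_1x_2=z_1-z_2$. Then $\mathcal{Q}$ contains a non-commuting subset of cardinality greater than $4q-12$.
   Context: A subset of $\mathcal{Q}$ is non-commuting if no two distinct elements of it commute. *)

theory Defs
  imports Main "HOL-Library.Cardinality"
begin

definition commutes :: "'a::field \<times> 'a \<times> 'a \<Rightarrow> 'a \<times> 'a \<times> 'a \<Rightarrow> bool" where
  "commutes p1 p2 = (case p1 of (x1, y1, z1) \<Rightarrow> case p2 of (x2, y2, z2) \<Rightarrow>
      x1 * y2 - y1 * x2 = z1 - z2)"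

definition non_commuting :: "('a::field \<times> 'a \<times> 'a) set \<Rightarrow> bool" where
  "non_commuting S = (\<forall>u\<in>S. \<forall>v\<in>S. u \<noteq> v \<longrightarrow> \<not> commutes u v)"

end

theory Submission
  imports Defs
begin

lemma commutes_simp: "commutes (x1,y1,z1) (x2,y2,z2) = (x1*y2 - y1*x2 = z1 - z2)"
  by (simp add: commutes_def)


lemma two_ne0:
  assumes "CHAR('a::field) \<noteq> 2" shows "(2::'a) \<noteq> 0"
proof
  assume "(2::'a) = 0"
  hence "of_nat 2 = (0::'a)" by simp
  hence d: "CHAR('a) dvd 2" by (simp only: of_nat_eq_0_iff_char_dvd)
  hence "CHAR('a) \<le> 2" by (rule dvd_imp_le) simp
  moreover have "CHAR('a) \<noteq> 0" using d by (metis dvd_0_left_iff zero_neq_numeral)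
  moreover have "CHAR('a) \<noteq> Suc 0" by simp
  ultimately show False using assms by linarith
qed

lemma three_ne0:
  assumes "CHAR('a::field) \<noteq> 3" shows "(3::'a) \<noteq> 0"
proof
  assume "(3::'a) = 0"
  hence "of_nat 3 = (0::'a)" by simp
  hence d: "CHAR('a) dvd 3" by (simp only: of_nat_eq_0_iff_char_dvd)
  hence "CHAR('a) \<le> 3" by (rule dvd_imp_le) simp
  moreover have "CHAR('a) \<noteq> 0" using d by (metis dvd_0_left_iff zero_neq_numeral)
  moreover have "CHAR('a) \<noteq> Suc 0" by simp
  moreover have "CHAR('a) \<noteq> 2" using d by (metis even_numeral odd_numeral)
  ultimately show False using assms by linarith
qed

lemma two_eq0:
  assumes "CHAR('a::field) = 2" shows "(2::'a) = 0"
proof -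
  have "of_nat CHAR('a) = (0::'a)" by simp
  thus ?thesis using assms by simp
qed





lemma char2_case:
  assumes two: "(2::'a::{finite,field}) = 0"
  shows "\<exists>S :: ('a \<times> 'a \<times> 'a) set. non_commuting S \<and>
           int (card S) > 4 * int (CARD('a)) - 12"
proof -
  let ?h = "\<lambda>s::'a. s*s + s"
  have ni: "\<not> inj ?h"
  proof
    assume i: "inj ?h"
    have "?h 1 = 2" by simp
    hence eq: "?h 0 = ?h 1" using two by simp
    have "(0::'a) = 1" by (rule injD[OF i eq])
    thus False by simp
  qed
  have "\<not> surj ?h"
  proof
    assume "surj ?h"
    hence "inj ?h" by (intro finite_UNIV_surj_inj) simp_all
    with ni show False by contradiction
  qed
  then obtain b where hb0: "b \<notin> range ?h" by blast
  have hb: "s*s+s \<noteq> b" for s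
  proof
    assume "s*s+s = b"
    hence "b = ?h s" by simp
    hence "b \<in> range ?h" by (rule range_eqI)
    with hb0 show False by contradiction
  qed
  define F where "F = (\<lambda>(x::'a,y::'a). (x, y, x*x + x*y + b*y*y))"
  define S where "S = F ` UNIV"
  have key: "x1 = x2 \<and> y1 = y2" if c: "commutes (F (x1,y1)) (F (x2,y2))" for x1 y1 x2 y2
  proof -
    define dx where "dx = x1 - x2"
    define dy where "dy = y1 - y2"
    have e: "x1*y2 - y1*x2 = (x1*x1 + x1*y1 + b*y1*y1) - (x2*x2 + x2*y2 + b*y2*y2)"
      using c by (simp add: F_def commutes_simp)
    have id: "dx*dx + dx*dy + b*dy*dy = ((x1*x1 + x1*y1 + b*y1*y1) - (x2*x2 + x2*y2 + b*y2*y2) - (x1*y2 - y1*x2))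
       + 2*(x2*x2 - x1*x2 - x2*y1 + x2*y2 - b*y1*y2 + b*y2*y2)"
      unfolding dx_def dy_def by (simp add: algebra_simps)
    have q: "dx*dx + dx*dy + b*dy*dy = 0"
      using id e two by simp
    show ?thesis
    proof (cases "dy = 0")
      case True
      with q have "dx = 0" by simp
      with True show ?thesis by (simp add: dx_def dy_def)
    next
      case False
      define s where "s = dx / dy"
      have "s*s + s + b = 0"
        using q False unfolding s_def by (simp add: field_simps)
      hence "s*s + s = - b" by (simp add: eq_neg_iff_add_eq_0)
      moreover have "- b = b" using two by (metis add_eq_0_iff mult_2 mult_zero_left)
      ultimately have "s*s + s = b" by simp
      with hb show ?thesis by blast
    qed
  qed
  have injF: "inj F"
  proof (rule injI)
    fix p1 p2 assume "F p1 = F p2"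
    thus "p1 = p2" by (cases p1, cases p2) (auto simp: F_def)
  qed
  have nc: "non_commuting S"
    unfolding non_commuting_def S_def
  proof (intro ballI impI notI)
    fix u v assume u: "u \<in> range F" and v: "v \<in> range F" and ne: "u \<noteq> v" and c0: "commutes u v"
    from u obtain x1 y1 where u1: "u = F (x1,y1)" by auto
    from v obtain x2 y2 where v1: "v = F (x2,y2)" by auto
    have c: "commutes (F (x1,y1)) (F (x2,y2))" using c0 u1 v1 by simp
    from key[OF c] ne u1 v1 show False by simp
  qed
  have cS: "card S = CARD('a) * CARD('a)"
    unfolding S_def using card_image[OF injF] by (simp add: card_prod)
  have "int (CARD('a) * CARD('a)) > 4 * int CARD('a) - 12"
  proof -
    have "(int CARD('a) - 2)^2 \<ge> 0" by simp
    thus ?thesis by (simp add: power2_eq_square algebra_simps)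
  qed
  with nc cS show ?thesis by auto
qed





definition ux :: "nat \<Rightarrow> 'a::field" where
  "ux j = (if j = 0 then 1 else if j = 1 then 0 else 1)"
definition uy :: "'a::field \<Rightarrow> nat \<Rightarrow> 'a" where
  "uy t j = (if j = 0 then 0 else if j = 1 then 1 else if j = 2 then 1 else t)"
definition al :: "'a::field \<Rightarrow> nat \<Rightarrow> 'a" where
  "al t j = (if j = 0 then 1 else if j = 1 then 1 else if j = 2 then 2 else 2 - t)"
definition be :: "'a::field \<Rightarrow> nat \<Rightarrow> 'a" where
  "be t j = (if j = 0 then 0 else if j = 1 then 1 else if j = 2 then 1 else 1 - t)"
definition dd :: "'a::field \<Rightarrow> nat \<Rightarrow> nat \<Rightarrow> 'a" where
  "dd t j k = ux j * uy t k - uy t j * ux k"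
definition XX :: "'a::field \<Rightarrow> nat \<Rightarrow> 'a \<Rightarrow> 'a" where
  "XX t j z = al t j * z + be t j"
definition PP :: "'a::field \<Rightarrow> nat \<Rightarrow> 'a \<Rightarrow> 'a \<times> 'a \<times> 'a" where
  "PP t j z = (XX t j z * ux j, XX t j z * uy t j, z)"
definition good :: "'a::field \<Rightarrow> nat \<Rightarrow> 'a \<Rightarrow> bool" where
  "good t j z = (\<forall>k<4. k \<noteq> j \<longrightarrow> dd t j k * al t k * XX t j z + 1 \<noteq> 0)"

lemma idx4: "(j::nat) < 4 \<Longrightarrow> j = 0 \<or> j = 1 \<or> j = 2 \<or> j = 3" by auto

lemma cross_gen:
  fixes d aj ak bj bk X Y z z' :: "'a::field"
  assumes h: "d*(aj*bk - bj*ak) = 1" and f1: "d*ak*X + 1 \<noteq> 0" and f2: "(-d)*aj*Y + 1 \<noteq> 0"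
    and X: "X = aj*z+bj" and Y: "Y = ak*z'+bk"
  shows "X*Y*d \<noteq> z - z'"
proof
  assume eq: "X*Y*d = z - z'"
  have id: "(d*ak*X + 1)*(d*aj*Y - 1) = d*aj*ak*(X*Y*d - z + z') + (d*(aj*bk - bj*ak) - 1)"
    unfolding X Y by (simp add: algebra_simps)
  have "(d*ak*X + 1)*(d*aj*Y - 1) = 0" using id eq h by simp
  moreover have "d*aj*Y - 1 \<noteq> 0" using f2 by (simp add: algebra_simps)
  ultimately show False using f1 by simp
qed

lemma commutes_PP:
  "commutes (PP t j z) (PP t k z') = (XX t j z * XX t k z' * dd t j k = z - z')"
  by (simp add: PP_def commutes_simp dd_def algebra_simps)

lemma aux:
  fixes a c W V t z :: "'a::field"
  assumes ca: "c*a = 1" and e: "a*W - V = -a*t - z" shows "W - c*V + t + c*z = 0"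
proof -
  have "c*(a*W - V) = c*(-a*t - z)" using e by simp
  hence "(c*a)*W - c*V = -((c*a)*t) - c*z" by (simp add: algebra_simps)
  hence "W - c*V = - t - c*z" using ca by simp
  thus ?thesis by (simp add: algebra_simps)
qed

context
  fixes t :: "'a::field"
  assumes two: "(2::'a) \<noteq> 0" and three: "(3::'a) \<noteq> 0" and ht: "t*t - t + 1 = 0"
begin

lemma htt: "t*t = t - 1" using ht by (simp add: algebra_simps eq_neg_iff_add_eq_0)

lemma t_ne0: "t \<noteq> 0" using ht by auto
lemma t_ne1: "t \<noteq> 1" using ht by auto
lemma t_ne2: "t \<noteq> 2"
proof
  assume "t = 2" with ht have "(3::'a) = 0" by simp
  with three show False by simp
qed
lemma t_nem1: "t + 1 \<noteq> 0"
proof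
  assume "t + 1 = 0" hence "t = -1" by (simp add: eq_neg_iff_add_eq_0)
  with ht have "(3::'a) = 0" by simp
  with three show False by simp
qed

lemma pair_det: "j < 4 \<Longrightarrow> k < 4 \<Longrightarrow> j \<noteq> k \<Longrightarrow> dd t j k * (al t j * be t k - be t j * al t k) = 1"
  apply (drule idx4)+
  apply (elim disjE)
  apply (simp_all add: dd_def ux_def uy_def al_def be_def algebra_simps htt)
  done

lemma t_ne2': "2 - t \<noteq> 0" using t_ne2 by simp
lemma t_ne1': "t - 1 \<noteq> 0" using t_ne1 by simp

lemma pair_nz: "j < 4 \<Longrightarrow> k < 4 \<Longrightarrow> j \<noteq> k \<Longrightarrow> dd t j k * al t k * al t j \<noteq> 0"
  apply (drule idx4)+
  apply (elim disjE)
  apply (simp_all add: dd_def ux_def uy_def al_def be_def t_ne0 t_ne2' t_ne1' t_ne1 t_ne2 two)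
  done

lemma dd_anti: "dd t k j = - dd t j k" by (simp add: dd_def algebra_simps)

lemma cross:
  assumes "j < 4" "k < 4" "j \<noteq> k" "good t j z" "good t k z'"
  shows "\<not> commutes (PP t j z) (PP t k z')"
proof -
  have f1: "dd t j k * al t k * XX t j z + 1 \<noteq> 0" using assms(4,2,3) by (simp add: good_def)
  have "dd t k j * al t j * XX t k z' + 1 \<noteq> 0" using assms(5,1,3) by (simp add: good_def)
  moreover have e: "dd t k j = - dd t j k" by (simp add: dd_def algebra_simps)
  ultimately have f2: "(- dd t j k) * al t j * XX t k z' + 1 \<noteq> 0" by simp
  show ?thesis unfolding commutes_PP
    by (rule cross_gen[OF pair_det[OF assms(1-3)] f1 f2]) (simp_all add: XX_def)
qed

lemma same:
  assumes "z \<noteq> z'" shows "\<not> commutes (PP t j z) (PP t j z')"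
  using assms by (simp add: commutes_PP dd_def)

lemma Q_R:
  assumes h12: "1 + 2*t \<noteq> 0"
    and c: "commutes (1/(1+2*t), 1, -(1/(1+2*t))*t) (PP t j z)"
  shows "XX t j z * uy t j - (1+2*t) * (XX t j z * ux j) + t + (1+2*t)*z = 0"
proof -
  have c': "1/(1+2*t) * (XX t j z * uy t j) - XX t j z * ux j = -(1/(1+2*t))*t - z"
    using c by (simp add: PP_def commutes_simp)
  show ?thesis by (rule aux[OF _ c']) (use h12 in simp)
qed

lemma Q_nc:
  assumes h12: "1 + 2*t \<noteq> 0" and j: "j < 4" and g: "good t j z"
  shows "\<not> commutes (1/(1+2*t), 1, -(1/(1+2*t))*t) (PP t j z)"
proof
  assume c: "commutes (1/(1+2*t), 1, -(1/(1+2*t))*t) (PP t j z)"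
  note R = Q_R[OF h12 c]
  consider "j = 0" | "j = 1" | "j = 2" | "j = 3" using idx4[OF j] by blast
  thus False
  proof cases
    case 1
    with R have "t = 0" by (simp add: XX_def ux_def uy_def al_def be_def algebra_simps)
    with t_ne0 show False by simp
  next
    case 2
    with R have "(2*z+1)*(1+t) = 0" by (simp add: XX_def ux_def uy_def al_def be_def algebra_simps)
    with t_nem1 have "2*z+1 = 0" by (simp add: add.commute)
    moreover have "dd t j 2 * al t 2 * XX t j z + 1 \<noteq> 0" using g 2 by (simp add: good_def)
    moreover have "dd t j 2 * al t 2 * XX t j z + 1 = -(2*z+1)"
      using 2 by (simp add: dd_def XX_def ux_def uy_def al_def be_def algebra_simps)
    ultimately show False by simp
  next
    case 3
    with R have R3: "z*(1-2*t) - t = 0" by (simp add: XX_def ux_def uy_def al_def be_def algebra_simps)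
    have "dd t j 3 * al t 3 * XX t j z + 1 = -2*(z*(1-2*t) - t) - (2*z + 1) * (t*t - t + 1)"
      using 3 by (simp add: dd_def XX_def ux_def uy_def al_def be_def algebra_simps)
    hence "dd t j 3 * al t 3 * XX t j z + 1 = 0" using R3 ht by simp
    moreover have "dd t j 3 * al t 3 * XX t j z + 1 \<noteq> 0" using g 3 by (simp add: good_def)
    ultimately show False by simp
  next
    case 4
    have "XX t j z * uy t j - (1+2*t) * (XX t j z * ux j) + t + (1+2*t)*z
        = 2*(t-1)*(z+1) + (z+1) * (t*t - t + 1)"
      using 4 by (simp add: XX_def ux_def uy_def al_def be_def algebra_simps)
    hence "2*(t-1)*(z+1) = 0" using R ht by simp
    hence "z + 1 = 0" using two t_ne1' by simp
    moreover have "dd t j 1 * al t 1 * XX t j z + 1 \<noteq> 0" using g 4 by (simp add: good_def)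
    moreover have "dd t j 1 * al t 1 * XX t j z + 1 = (2 - t) * (z + 1)"
      using 4 by (simp add: dd_def XX_def ux_def uy_def al_def be_def algebra_simps)
    ultimately show False by simp
  qed
qed

end

lemma commutes_refl: "commutes p p"
  by (cases p) (simp add: commutes_def split: prod.splits)

lemma commutes_sym: "commutes p q = commutes q p"
  by (cases p, cases q) (auto simp: commutes_def split: prod.splits, (metis minus_diff_eq mult.commute)+)

lemma odd_main:
  fixes t :: "'a::{finite,field}"
  assumes two: "(2::'a) \<noteq> 0" and three: "(3::'a) \<noteq> 0" and ht: "t*t - t + 1 = 0"
    and h12: "1 + 2*t \<noteq> 0"
  shows "\<exists>S :: ('a \<times> 'a \<times> 'a) set. non_commuting S \<and>
           int (card S) > 4 * int (CARD('a)) - 12"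
proof -
  define D where "D = {(j,z). j < (4::nat) \<and> good t j z}"
  define f where "f = (\<lambda>(j,z). PP t j z)"
  define Qp where "Qp = (1/(1+2*t), 1::'a, -(1/(1+2*t))*t)"
  define S where "S = insert Qp (f ` D)"
  have ncD: "\<not> commutes (f p) (f p')" if "p \<in> D" "p' \<in> D" "p \<noteq> p'" for p p'
  proof -
    obtain j z where p: "p = (j,z)" by (cases p)
    obtain k z' where p': "p' = (k,z')" by (cases p')
    have j: "j < 4" "good t j z" using that(1) p by (auto simp: D_def)
    have k: "k < 4" "good t k z'" using that(2) p' by (auto simp: D_def)
    show ?thesis
    proof (cases "j = k")
      case True
      with that(3) p p' have "z \<noteq> z'" by simp
      thus ?thesis using True p p' same[OF two three ht] by (simp add: f_def)
    next
      case False
      thus ?thesis using cross[OF two three ht j(1) k(1) False j(2) k(2)] p p' by (simp add: f_def)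
    qed
  qed
  have ncQ: "\<not> commutes Qp (f p)" if "p \<in> D" for p
  proof -
    obtain j z where p: "p = (j,z)" by (cases p)
    have j: "j < 4" "good t j z" using that p by (auto simp: D_def)
    show ?thesis using Q_nc[OF two three ht h12 j] p by (simp add: f_def Qp_def)
  qed
  have injf: "inj_on f D"
  proof (rule inj_onI)
    fix p p' assume "p \<in> D" "p' \<in> D" "f p = f p'"
    thus "p = p'" using ncD commutes_refl by metis
  qed
  have QnD: "Qp \<notin> f ` D"
  proof
    assume "Qp \<in> f ` D"
    then obtain p where "p \<in> D" "Qp = f p" by blast
    thus False using ncQ commutes_refl by metis
  qed
  have nc: "non_commuting S"
    unfolding non_commuting_def
  proof (intro ballI impI notI)
    fix u v assume u: "u \<in> S" and v: "v \<in> S" and ne: "u \<noteq> v" and c: "commutes u v"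
    show False
    proof (cases "u = Qp")
      case True
      with ne v obtain p where "p \<in> D" "v = f p" by (auto simp: S_def)
      thus False using ncQ c True by blast
    next
      case False
      with u obtain p where p: "p \<in> D" "u = f p" by (auto simp: S_def)
      show False
      proof (cases "v = Qp")
        case True
        thus False using ncQ[OF p(1)] c p(2) commutes_sym by metis
      next
        case False
        with v obtain p' where p': "p' \<in> D" "v = f p'" by (auto simp: S_def)
        with p ne have "p \<noteq> p'" by blast
        thus False using ncD[OF p(1) p'(1)] c p(2) p'(2) by blast
      qed
    qed
  qed
  define A where "A = ({..<(4::nat)} \<times> (UNIV :: 'a set))"
  define K where "K = {(j,k). j < (4::nat) \<and> k < (4::nat) \<and> j \<noteq> k}"
  define zb where "zb = (\<lambda>j k. - (1 + dd t j k * al t k * be t j) / (dd t j k * al t k * al t j))"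
  define g where "g = (\<lambda>(j,k). (j, zb j k))"
  have finA: "finite A" unfolding A_def by simp
  have DA: "D = A - (A - D)" unfolding A_def D_def by auto
  have BK: "A - D \<subseteq> g ` K"
  proof
    fix p assume "p \<in> A - D"
    then obtain j z where p: "p = (j,z)" "j < 4" "\<not> good t j z" by (auto simp: A_def D_def)
    then obtain k where k: "k < 4" "k \<noteq> j" "dd t j k * al t k * XX t j z + 1 = 0"
      by (auto simp: good_def)
    have nz: "dd t j k * al t k * al t j \<noteq> 0" using pair_nz[OF two three ht p(2) k(1) k(2)[symmetric]] .
    have "dd t j k * al t k * al t j * z = - (1 + dd t j k * al t k * be t j)"
      using k(3) by (simp add: XX_def algebra_simps eq_neg_iff_add_eq_0)
    hence "z = zb j k" using nz unfolding zb_def by (simp add: field_simps)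
    moreover have "(j,k) \<in> K" using p(2) k unfolding K_def by auto
    ultimately show "p \<in> g ` K" using p(1) unfolding g_def by force
  qed
  have K12: "K = {(0,1),(0,2),(0,3),(1,0),(1,2),(1,3),(2,0),(2,1),(2,3),(3,0),(3,1),(3,2)}"
  proof
    show "K \<subseteq> {(0,1),(0,2),(0,3),(1,0),(1,2),(1,3),(2,0),(2,1),(2,3),(3,0),(3,1),(3,2)}"
    proof
      fix p assume "p \<in> K"
      then obtain j k where "p = (j,k)" "j < 4" "k < 4" "j \<noteq> k" by (auto simp: K_def)
      thus "p \<in> {(0,1),(0,2),(0,3),(1,0),(1,2),(1,3),(2,0),(2,1),(2,3),(3,0),(3,1),(3,2)}"
        using idx4[of j] idx4[of k] by auto
    qed
  qed (auto simp: K_def)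
  have cK: "card K = 12" unfolding K12 by simp
  have cB: "card (A - D) \<le> 12"
  proof -
    have "card (A - D) \<le> card (g ` K)" by (rule card_mono) (simp add: K12, rule BK)
    also have "\<dots> \<le> card K" by (rule card_image_le) (simp add: K12)
    finally show ?thesis using cK by simp
  qed
  have cA: "card A = 4 * CARD('a)" unfolding A_def by (simp add: card_cartesian_product)
  have "card A - card (A - D) \<le> card (A - (A - D))"
    by (rule diff_card_le_card_Diff) (simp add: finA)
  hence "card A - card (A - D) \<le> card D" by (simp only: DA[symmetric])
  hence cD: "4 * CARD('a) - 12 \<le> card D" using cA cB by linarith
  have finD: "finite D" using DA finA by (metis finite_Diff)
  have cS: "card S = Suc (card D)"
    unfolding S_def using QnD card_image[OF injf] finD by simp
  have "int (card S) > 4 * int (CARD('a)) - 12" using cS cD by linarith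
  with nc show ?thesis by blast
qed


theorem lemma7p7:
  assumes "CHAR('a::{finite,field}) \<noteq> 3"
    and "\<exists>r::'a. r * r = - 3"
  shows "\<exists>S :: ('a \<times> 'a \<times> 'a) set. non_commuting S \<and>
           int (card S) > 4 * int (CARD('a)) - 12"
proof (cases "CHAR('a) = 2")
  case True
  show ?thesis by (rule char2_case[OF two_eq0[OF True]])
next
  case False
  have two: "(2::'a) \<noteq> 0" by (rule two_ne0[OF False])
  have three: "(3::'a) \<noteq> 0" by (rule three_ne0[OF assms(1)])
  obtain r :: 'a where r: "r * r = - 3" using assms(2) by blast
  have root: "s*s - s + 1 = 0" if "s = (1 + e)/2" "e*e = -3" for s e :: 'a
  proof -
    have "4 * (s*s - s + 1) = (2*s)*(2*s) - 2*(2*s) + 4" by (simp add: algebra_simps)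
    also have "2*s = 1 + e" using that(1) two by (simp add: field_simps mult.commute)
    finally have "4 * (s*s - s + 1) = (1+e)*(1+e) - 2*(1+e) + 4" .
    also have "\<dots> = e*e + 3" by (simp add: algebra_simps)
    finally have "4 * (s*s - s + 1) = 0" using that(2) by simp
    moreover have "(4::'a) \<noteq> 0" using two by (metis mult_2 mult_eq_0_iff numeral_Bit0 one_add_one)
    ultimately show ?thesis using mult_eq_0_iff[of "4::'a" "s*s - s + 1"] by blast
  qed
  show ?thesis
  proof (cases "1 + 2*((1+r)/2) = (0::'a)")
    case False
    show ?thesis by (rule odd_main[OF two three root[OF refl r] False])
  next
    case True
    have r2: "(-r)*(-r) = -3" using r by simp
    have "1 + 2*((1+r)/2) = 2 + r" using two by simp
    with True have "r = -2" by (simp add: eq_neg_iff_add_eq_0 add.commute)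
    have h: "1 + 2*((1+(-r))/2) \<noteq> (0::'a)"
    proof
      assume "1 + 2*((1+(-r))/2) = (0::'a)"
      moreover have "1 + 2*((1+(-r))/2) = 2 - r" using two by simp
      ultimately have "2 - r = 0" by simp
      with \<open>r = -2\<close> have "(2::'a) + 2 = 0" by simp
      hence "2 * (2::'a) = 0" by (simp only: mult_2)
      with two show False using mult_eq_0_iff[of "2::'a" "2"] by blast
    qed
    show ?thesis by (rule odd_main[OF two three root[OF refl r2] h])
  qed
qed

end
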